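(* Let $A\in\mathbb{R}^{n\times n}$ be symmetric, $Z\in\mathbb{R}^{n\times k}$, $\alpha\in\{+1,-1\}$, $\beta\in\{+1,-1\}$, and suppose that both $A$ and $A+\alpha ZZ^{T}$ are positive definite. Let $V\in\mathbb{R}^{n\times k}$ be defined by $V=Z$ if $\beta=1$ and $V=A^{-1}Z(I_k+\alpha Z^{T}A^{-1}Z)^{-1/2}$ if $\beta=-1$. Consider the matrix equation in $C\in\mathbb{R}^{n\times n}$ \[ A^{\beta/2}C+CA^{\beta/2}+\alpha\beta C^{2}=VV^{T}. \quad (\ast) \] Then $C=\alpha\beta\left((A+\alpha ZZ^{T})^{\beta/2}-A^{\beta/2}\right)$ is a solution of $(\ast)$. Conversely, if $C$ is a positive definite solution of $(\ast)$ for which $A^{\beta/2}+\alpha\beta C$ is positive definite as well, then $A^{\beta/2}+\alpha\beta C=(A+\alpha ZZ^{T})^{\beta/2}$.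
   Context: For a symmetric positive definite matrix $M$, $M^{1/2}$ is its principal square root and $M^{-1/2}=(M^{1/2})^{-1}$; $M^{\beta/2}$ is interpreted accordingly for $\beta=\pm1$. With this choice of $V$ one has $(A+\alpha ZZ^{T})^{\beta}=A^{\beta}+\alpha\beta VV^{T}$. *)

theory Defs
  imports "HOL-Analysis.Analysis"
begin

definition pos_def :: "real^'n^'n \<Rightarrow> bool" where
  "pos_def M \<longleftrightarrow> transpose M = M \<and> (\<forall>x. x \<noteq> 0 \<longrightarrow> x \<bullet> (M *v x) > 0)"

definition msqrt :: "real^'n^'n \<Rightarrow> real^'n^'n" where
  "msqrt M = (THE S. pos_def S \<and> S ** S = M)"

text \<open>M^(beta/2) for beta = 1 or -1: M^(1/2), resp. (M^(1/2))^(-1).\<close>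
definition mpow_half :: "real \<Rightarrow> real^'n^'n \<Rightarrow> real^'n^'n" where
  "mpow_half \<beta> M = (if \<beta> = 1 then msqrt M else matrix_inv (msqrt M))"

end

theory Submission
  imports Defs
begin

lemma mm_sub_ldistrib: "(A::real^'n^'m) ** (B - C) = A ** B - A ** C"
  by (simp add: matrix_matrix_mult_def vec_eq_iff sum_subtractf algebra_simps)
lemma mm_sub_rdistrib: "((B::real^'n^'m) - C) ** (A::real^'k^'n) = B ** A - C ** A"
  by (simp add: matrix_matrix_mult_def vec_eq_iff sum_subtractf algebra_simps)
lemma mm_add_rdistrib: "((B::real^'n^'m) + C) ** (A::real^'k^'n) = B ** A + C ** A"
  by (simp add: matrix_matrix_mult_def vec_eq_iff sum.distrib algebra_simps)
lemma mm_scaleR_left: "(r *\<^sub>R (B::real^'n^'m)) ** (A::real^'k^'n) = r *\<^sub>R (B ** A)"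
  by (simp add: matrix_matrix_mult_def vec_eq_iff sum_distrib_left algebra_simps)
lemma mm_scaleR_right: "(B::real^'n^'m) ** (r *\<^sub>R (A::real^'k^'n)) = r *\<^sub>R (B ** A)"
  by (simp add: matrix_matrix_mult_def vec_eq_iff sum_distrib_left algebra_simps)
lemma transpose_add': "transpose ((A::real^'n^'m) + B) = transpose A + transpose B"
  by (simp add: transpose_def vec_eq_iff)
lemma transpose_scaleR': "transpose (r *\<^sub>R (A::real^'n^'m)) = r *\<^sub>R transpose A"
  by (simp add: transpose_def vec_eq_iff)
lemma transpose_diff': "transpose ((A::real^'n^'m) - B) = transpose A - transpose B"
  by (simp add: transpose_def vec_eq_iff)

lemma inner_transpose: "(x::real^'n) \<bullet> (transpose (Z::real^'n^'m) *v u) = (Z *v x) \<bullet> u"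
  by (metis dot_lmul_matrix inner_commute transpose_matrix_vector)

lemma inner_vmul: "(x::real^'n) \<bullet> (u v* (Z::real^'n^'m)) = (Z *v x) \<bullet> u"
  by (metis dot_lmul_matrix inner_commute)

lemma sym_inner: "transpose M = M \<Longrightarrow> (x::real^'n) \<bullet> (M *v y) = (M *v x) \<bullet> y"
  by (metis inner_transpose)

lemma inv_props:
  assumes "invertible (A::real^'n^'n)"
  shows "A ** matrix_inv A = mat 1" "matrix_inv A ** A = mat 1"
proof -
  have "\<exists>A'. A ** A' = mat 1 \<and> A' ** A = mat 1" using assms invertible_def by blast
  then have "A ** matrix_inv A = mat 1 \<and> matrix_inv A ** A = mat 1"
    unfolding matrix_inv_def by (rule someI_ex)
  then show "A ** matrix_inv A = mat 1" "matrix_inv A ** A = mat 1" by auto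
qed

lemma inv_unique:
  assumes "(A::real^'n^'n) ** B = mat 1"
  shows "matrix_inv A = B"
proof -
  have "invertible A" using assms invertible_right_inverse by blast
  then have "matrix_inv A = matrix_inv A ** (A ** B)" using assms by simp
  also have "\<dots> = B" using inv_props[OF \<open>invertible A\<close>] by (metis matrix_mul_assoc matrix_mul_lid)
  finally show ?thesis .
qed

lemma pd_invertible:
  assumes "pos_def (P::real^'n^'n)"
  shows "invertible P"
proof -
  have "\<forall>x. P *v x = 0 \<longrightarrow> x = 0"
    using assms unfolding pos_def_def by (metis inner_zero_right less_irrefl)
  then show ?thesis using matrix_left_invertible_ker invertible_left_inverse by blast
qed

lemma pd_inv:
  assumes "pos_def (P::real^'n^'n)"
  shows "pos_def (matrix_inv P)"
proof -
  have sym: "transpose P = P" using assms pos_def_def by blast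
  note ip = inv_props[OF pd_invertible[OF assms]]
  have "P ** transpose (matrix_inv P) = mat 1"
    by (metis ip(2) matrix_transpose_mul sym transpose_mat)
  then have t: "transpose (matrix_inv P) = matrix_inv P" using inv_unique by metis
  have "x \<bullet> (matrix_inv P *v x) > 0" if "x \<noteq> 0" for x
  proof -
    define y where "y = matrix_inv P *v x"
    have xy: "x = P *v y" unfolding y_def by (simp add: matrix_vector_mul_assoc ip)
    then have "y \<noteq> 0" using that by auto
    then have "y \<bullet> (P *v y) > 0" using assms pos_def_def by blast
    then show ?thesis using xy y_def by (metis inner_commute)
  qed
  then show ?thesis using t pos_def_def by blast
qed

lemma quad_expand:
  assumes "transpose M = M"
  shows "(v + t *\<^sub>R w) \<bullet> (M *v (v + t *\<^sub>R w)) =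
     v \<bullet> (M *v v) + 2 * t * (w \<bullet> (M *v v)) + t\<^sup>2 * (w \<bullet> (M *v (w::real^'n)))"
proof -
  have "v \<bullet> (M *v w) = w \<bullet> (M *v v)" using sym_inner[OF assms] by (metis inner_commute)
  then show ?thesis
    by (simp add: matrix_vector_right_distrib matrix_vector_mult_scaleR inner_add_left inner_add_right
        power2_eq_square algebra_simps)
qed

lemma max_eigen:
  fixes M :: "real^'n^'n"
  assumes sym: "transpose M = M" and sub: "subspace S" and inv: "\<And>x. x \<in> S \<Longrightarrow> M *v x \<in> S"
    and ne: "x0 \<in> S" "x0 \<noteq> 0"
  shows "\<exists>v\<in>S. norm v = 1 \<and> M *v v = (v \<bullet> (M *v v)) *\<^sub>R v \<and>
            (\<forall>x\<in>S. x \<bullet> (M *v x) \<le> (v \<bullet> (M *v v)) * (x \<bullet> x))"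
proof -
  define K where "K = S \<inter> sphere 0 1"
  have "compact K" unfolding K_def
    using closed_subspace[OF sub] compact_sphere by (simp add: closed_Int_compact)
  have "x0 /\<^sub>R norm x0 \<in> K" unfolding K_def using ne sub
    by (simp add: subspace_scale)
  then have "K \<noteq> {}" by auto
  have "continuous_on K (\<lambda>x. x \<bullet> (M *v x))"
    by (intro continuous_intros)
  then obtain v where v: "v \<in> K" and vmax: "\<And>y. y \<in> K \<Longrightarrow> y \<bullet> (M *v y) \<le> v \<bullet> (M *v v)"
    using continuous_attains_sup[OF \<open>compact K\<close> \<open>K \<noteq> {}\<close>] by blast
  define l where "l = v \<bullet> (M *v v)"
  have vS: "v \<in> S" and nv: "norm v = 1" using v K_def by auto
  have vv: "v \<bullet> v = 1" using nv by (simp add: dot_square_norm)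
  have Q: "x \<bullet> (M *v x) \<le> l * (x \<bullet> x)" if "x \<in> S" for x
  proof (cases "x = 0")
    case True then show ?thesis by simp
  next
    case False
    define y where "y = x /\<^sub>R norm x"
    have "y \<in> K" unfolding K_def y_def using that sub False by (simp add: subspace_scale)
    then have "y \<bullet> (M *v y) \<le> l" using vmax l_def by blast
    moreover have "y \<bullet> (M *v y) = (x \<bullet> (M *v x)) / (norm x)^2"
      unfolding y_def by (simp add: matrix_vector_mult_scaleR power2_eq_square field_simps)
    moreover have "x \<bullet> x = (norm x)^2" by (simp add: dot_square_norm)
    moreover have "norm x > 0" using False by simp
    ultimately show ?thesis by (simp add: field_simps)
  qed
  define w where "w = l *\<^sub>R v - M *v v"
  have wS: "w \<in> S" unfolding w_def using sub vS inv by (simp add: subspace_diff subspace_scale)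
  have wv: "w \<bullet> v = 0" unfolding w_def l_def using vv by (simp add: inner_diff_left inner_commute[of "M *v v" v])
  have key: "0 \<le> 2 * t * (w \<bullet> w) + t\<^sup>2 * (l * (w \<bullet> w) - w \<bullet> (M *v w))" for t
  proof -
    have "v + t *\<^sub>R w \<in> S" using sub vS wS by (simp add: subspace_add subspace_scale)
    then have "(v + t *\<^sub>R w) \<bullet> (M *v (v + t *\<^sub>R w)) \<le> l * ((v + t *\<^sub>R w) \<bullet> (v + t *\<^sub>R w))"
      by (rule Q)
    moreover have "w \<bullet> (M *v v) = - (w \<bullet> w)"
      using wv unfolding w_def by (simp add: inner_diff_left inner_diff_right algebra_simps)
    ultimately show ?thesis using quad_expand[OF sym, of v t w] vv wv l_def
      by (simp add: inner_add_left inner_add_right inner_commute power2_eq_square algebra_simps)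
  qed
  have q0: "0 \<le> l * (w \<bullet> w) - w \<bullet> (M *v w)" using Q[OF wS] by simp
  have "w \<bullet> w = 0"
  proof (rule ccontr)
    assume "w \<bullet> w \<noteq> 0"
    then have a: "w \<bullet> w > 0" by simp
    define q where "q = l * (w \<bullet> w) - w \<bullet> (M *v w)"
    define t where "t = - (w \<bullet> w) / (q + 1)"
    have k0: "0 \<le> 2 * t * (w \<bullet> w) + t\<^sup>2 * q" using key q_def by simp
    have qq: "q \<ge> 0" using q0 q_def by simp
    moreover have "2 * t * (w \<bullet> w) + t\<^sup>2 * q < 0"
    proof -
      have e: "2 * t * a + t\<^sup>2 * q < 0" if "t = - a / (q + 1)" "q \<ge> 0" "a > 0" for a t q :: real
      proof -
        have d: "q + 1 > 0" using that by simp
        have t0: "t < 0" using that d by (simp add: divide_neg_pos)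
        have "q / (q + 1) < 1" using d by simp
        then have "a * (q / (q + 1)) < a * 1" using that(3) by (intro mult_strict_left_mono)
        then have "t * q > - a" using that(1) by (simp add: field_simps)
        then have "2 * a + t * q > 0" using that(3) by linarith
        then have "t * (2 * a + t * q) < 0" using t0 by (simp add: mult_neg_pos)
        then show ?thesis by (simp add: power2_eq_square algebra_simps)
      qed
      show ?thesis using e[OF t_def qq a] .
    qed
    ultimately show False using k0 by linarith
  qed
  then have "w = 0" by simp
  then have "M *v v = l *\<^sub>R v" unfolding w_def by simp
  then show ?thesis using vS nv Q l_def by blast
qed

definition eigsys :: "real^'n^'n \<Rightarrow> (real^'n) set \<Rightarrow> bool" where
  "eigsys M B \<longleftrightarrow> finite B \<and> pairwise orthogonal B \<and>
     (\<forall>b\<in>B. norm b = 1 \<and> M *v b = (b \<bullet> (M *v b)) *\<^sub>R b)"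

lemma eigsys_card:
  fixes M :: "real^'n^'n"
  assumes "eigsys M B" shows "card B \<le> CARD('n)"
proof -
  have "0 \<notin> B" using assms unfolding eigsys_def by force
  then have "independent B" using assms unfolding eigsys_def
    by (intro pairwise_orthogonal_independent) auto
  then show ?thesis using independent_card_le[OF \<open>independent B\<close>] by simp
qed

lemma spectral:
  fixes M :: "real^'n^'n"
  assumes sym: "transpose M = M"
  shows "\<exists>B. eigsys M B \<and> span B = UNIV"
proof -
  have "eigsys M {}" unfolding eigsys_def by simp
  moreover have "\<forall>B'. eigsys M B' \<longrightarrow> card B' < CARD('n) + 1"
    using eigsys_card[of M] by (simp add: less_Suc_eq_le)
  ultimately obtain B where B: "eigsys M B" and Bmax0: "\<forall>B'. eigsys M B' \<longrightarrow> card B' \<le> card B"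
    using ex_has_greatest_nat[of "eigsys M" "{}" card] by blast
  have Bmax: "\<And>B'. eigsys M B' \<Longrightarrow> card B' \<le> card B" using Bmax0 by blast
  have "span B = UNIV"
  proof (rule ccontr)
    assume ns: "span B \<noteq> UNIV"
    have "dim B \<le> DIM(real^'n)" by (rule dim_subset_UNIV)
    moreover have "dim B \<noteq> DIM(real^'n)" using ns dim_eq_full by blast
    ultimately have "dim B < DIM(real^'n)" by simp
    then obtain x0 where x0: "x0 \<noteq> 0" "\<And>y. y \<in> span B \<Longrightarrow> orthogonal x0 y"
      using orthogonal_to_subspace_exists by blast
    define S where "S = {x. \<forall>b\<in>B. b \<bullet> x = 0}"
    have sub: "subspace S" unfolding S_def subspace_def
      by (simp add: inner_add_right)
    have x0S: "x0 \<in> S" unfolding S_def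
    proof (intro CollectI ballI)
      fix b assume "b \<in> B"
      then have "orthogonal x0 b" using x0(2) span_base by blast
      then show "b \<bullet> x0 = 0" by (simp add: orthogonal_def inner_commute)
    qed
    have inv: "M *v x \<in> S" if "x \<in> S" for x
    proof -
      have "b \<bullet> (M *v x) = 0" if "b \<in> B" for b
      proof -
        have "b \<bullet> (M *v x) = (M *v b) \<bullet> x" using sym_inner[OF sym] by blast
        also have "\<dots> = (b \<bullet> (M *v b)) * (b \<bullet> x)"
        proof -
          define l where "l = b \<bullet> (M *v b)"
          have e: "M *v b = l *\<^sub>R b" using B \<open>b \<in> B\<close> unfolding eigsys_def l_def by blast
          show ?thesis unfolding l_def[symmetric] by (simp add: e)
        qed
        also have "\<dots> = 0" using \<open>x \<in> S\<close> \<open>b \<in> B\<close> S_def by simp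
        finally show ?thesis .
      qed
      then show ?thesis unfolding S_def by blast
    qed
    obtain v where v: "v \<in> S" "norm v = 1" "M *v v = (v \<bullet> (M *v v)) *\<^sub>R v"
      using max_eigen[OF sym sub inv x0S x0(1)] by blast
    have vB: "v \<notin> B"
    proof
      assume "v \<in> B"
      then have "v \<bullet> v = 0" using v(1) S_def by blast
      then show False using v(2) by simp
    qed
    have "\<forall>b\<in>B. orthogonal v b \<and> orthogonal b v"
      using v(1) unfolding S_def orthogonal_def by (simp add: inner_commute[of v])
    then have "eigsys M (insert v B)"
      using B v vB unfolding eigsys_def pairwise_insert by auto
    then have "card (insert v B) \<le> card B" by (rule Bmax)
    moreover have "card (insert v B) = card B + 1" using vB B unfolding eigsys_def by simp
    ultimately show False by simp
  qed
  then show ?thesis using B by blast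
qed

lemma outer_sum_mult:
  fixes B :: "(real^'n) set" and c :: "real^'n \<Rightarrow> real"
  shows "(\<Sum>b\<in>B. c b *\<^sub>R (\<chi> i j. b$i * b$j)) *v x = (\<Sum>b\<in>B. (c b * (b \<bullet> x)) *\<^sub>R b)"
  by (simp add: vec_eq_iff matrix_vector_mult_def sum_component inner_vec_def sum_distrib_left
      sum_distrib_right mult_ac sum.swap[of _ B])

lemma outer_sum_transpose:
  fixes B :: "(real^'n) set" and c :: "real^'n \<Rightarrow> real"
  shows "transpose (\<Sum>b\<in>B. c b *\<^sub>R (\<chi> i j. b$i * b$j)) = (\<Sum>b\<in>B. c b *\<^sub>R (\<chi> i j. b$i * b$j))"
  by (simp add: vec_eq_iff transpose_def sum_component mult_ac)

lemma eigsys_orth: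
  assumes "eigsys M B" "b \<in> B" "b' \<in> B"
  shows "b' \<bullet> b = (if b' = b then 1 else 0)"
proof (cases "b' = b")
  case True
  then show ?thesis using assms unfolding eigsys_def by (simp add: dot_square_norm)
next
  case False
  then show ?thesis using assms unfolding eigsys_def pairwise_def orthogonal_def by auto
qed

lemma zero_on_span:
  fixes x :: "real^'n"
  assumes "span B = UNIV" "\<And>b. b \<in> B \<Longrightarrow> b \<bullet> x = 0"
  shows "x = 0"
proof -
  have "linear (\<lambda>y. y \<bullet> x)" using bounded_linear_inner_left bounded_linear.linear by blast
  then have "x \<bullet> x = (\<lambda>y. 0) x"
    using real_vector.linear_eq_on_span[of "\<lambda>y. y \<bullet> x" "\<lambda>y. 0" B x] assms linear_zero by auto
  then show ?thesis by simp
qed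

lemma psd_sqrt_exists:
  fixes M :: "real^'n^'n"
  assumes pd: "pos_def M"
  shows "\<exists>S. pos_def S \<and> S ** S = M"
proof -
  have sym: "transpose M = M" using pd pos_def_def by blast
  obtain B where B: "eigsys M B" and spB: "span B = UNIV" using spectral[OF sym] by blast
  define l where "l b = b \<bullet> (M *v b)" for b
  have eig: "M *v b = l b *\<^sub>R b" if "b \<in> B" for b using B that unfolding eigsys_def l_def by blast
  have lpos: "l b > 0" if "b \<in> B" for b
  proof -
    have "b \<noteq> 0" using B that unfolding eigsys_def by force
    then show ?thesis using pd unfolding pos_def_def l_def by blast
  qed
  have finB: "finite B" using B eigsys_def by blast
  define S where "S = (\<Sum>b\<in>B. sqrt (l b) *\<^sub>R (\<chi> i j. b$i * b$j))"
  have Sv: "S *v x = (\<Sum>b\<in>B. (sqrt (l b) * (b \<bullet> x)) *\<^sub>R b)" for x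
    unfolding S_def by (rule outer_sum_mult)
  have Sb: "S *v b = sqrt (l b) *\<^sub>R b" if "b \<in> B" for b
  proof -
    have "S *v b = (\<Sum>b'\<in>B. (if b' = b then sqrt (l b) *\<^sub>R b else 0))"
      unfolding Sv using eigsys_orth[OF B that] by (intro sum.cong) auto
    also have "\<dots> = sqrt (l b) *\<^sub>R b"
      using finB that by simp
    finally show ?thesis .
  qed
  have SS: "S ** S = M"
  proof -
    have bs: "(S ** S) *v b = M *v b" if "b \<in> B" for b
    proof -
        have "(S ** S) *v b = S *v (S *v b)" by (simp add: matrix_vector_mul_assoc)
        also have "\<dots> = sqrt (l b) *\<^sub>R (S *v b)" using Sb[OF \<open>b \<in> B\<close>] by (simp add: matrix_vector_mult_scaleR)
        also have "\<dots> = (sqrt (l b) * sqrt (l b)) *\<^sub>R b" using Sb[OF \<open>b \<in> B\<close>] by simp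
        also have "\<dots> = M *v b" using lpos[OF \<open>b \<in> B\<close>] eig[OF \<open>b \<in> B\<close>] by simp
        finally show ?thesis .
    qed
    have "(S ** S) *v x = M *v x" for x
      using real_vector.linear_eq_on_span[of "\<lambda>x. (S ** S) *v x" "\<lambda>x. M *v x" B x] spB bs by simp
    then show ?thesis by (simp add: matrix_eq)
  qed
  have St: "transpose S = S" unfolding S_def by (rule outer_sum_transpose)
  have "x \<bullet> (S *v x) > 0" if "x \<noteq> 0" for x
  proof -
    have e: "x \<bullet> (S *v x) = (\<Sum>b\<in>B. sqrt (l b) * (b \<bullet> x)^2)"
      unfolding Sv by (simp add: inner_sum_right power2_eq_square inner_commute mult_ac)
    have nn: "\<And>b. b \<in> B \<Longrightarrow> 0 \<le> sqrt (l b) * (b \<bullet> x)^2" using lpos by (auto intro!: mult_nonneg_nonneg simp: less_imp_le)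
    have "x \<bullet> (S *v x) \<noteq> 0"
    proof
      assume "x \<bullet> (S *v x) = 0"
      then have s0: "(\<Sum>b\<in>B. sqrt (l b) * (b \<bullet> x)^2) = 0" using e by simp
      have all0: "\<forall>b\<in>B. sqrt (l b) * (b \<bullet> x)^2 = 0"
        using sum_nonneg_eq_0_iff[OF finB, of "\<lambda>b. sqrt (l b) * (b \<bullet> x)^2"] nn s0 by blast
      have "b \<bullet> x = 0" if "b \<in> B" for b
      proof -
        have "sqrt (l b) > 0" using lpos[OF that] by simp
        moreover have "sqrt (l b) * (b \<bullet> x)^2 = 0" using all0 that by blast
        ultimately show ?thesis by simp
      qed
      then have "x = 0" using zero_on_span[OF spB] by blast
      then show False using that by simp
    qed
    moreover have "x \<bullet> (S *v x) \<ge> 0" using e nn by (simp add: sum_nonneg)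
    ultimately show ?thesis by simp
  qed
  then have "pos_def S" using St pos_def_def by blast
  then show ?thesis using SS by blast
qed

lemma psd_sqrt_unique:
  fixes P Q :: "real^'n^'n"
  assumes P: "pos_def P" and Q: "pos_def Q" and PQ: "P ** P = Q ** Q"
  shows "P = Q"
proof -
  define X where "X = P - Q"
  have Pt: "transpose P = P" and Qt: "transpose Q = Q" using P Q pos_def_def by auto
  have Xt: "transpose X = X" unfolding X_def by (simp add: transpose_diff' Pt Qt)
  obtain B where B: "eigsys X B" and spB: "span B = UNIV" using spectral[OF Xt] by blast
  have Z: "P ** X + X ** Q = 0" unfolding X_def using PQ
    by (simp add: mm_sub_ldistrib mm_sub_rdistrib)
  have Xb: "X *v b = 0" if "b \<in> B" for b
  proof -
    define l where "l = b \<bullet> (X *v b)"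
    have e: "X *v b = l *\<^sub>R b" using B that unfolding eigsys_def l_def by blast
    have b0: "b \<noteq> 0" using B that unfolding eigsys_def by force
    have "0 = b \<bullet> ((P ** X + X ** Q) *v b)" using Z by simp
    also have "\<dots> = b \<bullet> (P *v (X *v b)) + b \<bullet> (X *v (Q *v b))"
      by (simp add: matrix_vector_mult_add_rdistrib matrix_vector_mul_assoc inner_add_right)
    also have "b \<bullet> (X *v (Q *v b)) = (X *v b) \<bullet> (Q *v b)" using sym_inner[OF Xt] by blast
    also have "b \<bullet> (P *v (X *v b)) + (X *v b) \<bullet> (Q *v b) = l * (b \<bullet> (P *v b) + b \<bullet> (Q *v b))"
      unfolding e by (simp add: matrix_vector_mult_scaleR algebra_simps)
    finally have "l * (b \<bullet> (P *v b) + b \<bullet> (Q *v b)) = 0" by simp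
    moreover have "b \<bullet> (P *v b) > 0" "b \<bullet> (Q *v b) > 0" using P Q b0 unfolding pos_def_def by blast+
    then have "b \<bullet> (P *v b) + b \<bullet> (Q *v b) > 0" by simp
    ultimately have "l = 0" by simp
    then show ?thesis using e by simp
  qed
  have "X *v x = 0 *v x" for x
    using real_vector.linear_eq_on_span[of "\<lambda>x. X *v x" "\<lambda>x. 0 *v x" B x] spB Xb bounded_linear_zero[THEN bounded_linear.linear] by simp
  then have "X = 0" by (simp add: matrix_eq)
  then show ?thesis unfolding X_def by simp
qed

lemma msqrt_props:
  fixes M :: "real^'n^'n"
  assumes "pos_def M"
  shows "pos_def (msqrt M) \<and> msqrt M ** msqrt M = M"
proof -
  obtain S where S: "pos_def S" "S ** S = M" using psd_sqrt_exists[OF assms] by blast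
  have "msqrt M = S" unfolding msqrt_def
  proof (rule the_equality)
    show "pos_def S \<and> S ** S = M" using S by simp
    fix T assume "pos_def T \<and> T ** T = M"
    then show "T = S" using S psd_sqrt_unique by metis
  qed
  then show ?thesis using S by simp
qed

lemma mpow_props:
  fixes M :: "real^'n^'n"
  assumes "pos_def M" "\<beta> \<in> {1, -1}"
  shows "pos_def (mpow_half \<beta> M) \<and>
         mpow_half \<beta> M ** mpow_half \<beta> M = (if \<beta> = 1 then M else matrix_inv M)"
proof (cases "\<beta> = 1")
  case True
  then show ?thesis using msqrt_props[OF assms(1)] unfolding mpow_half_def by simp
next
  case False
  define R where "R = msqrt M"
  have R: "pos_def R" "R ** R = M" using msqrt_props[OF assms(1)] R_def by auto
  note ip = inv_props[OF pd_invertible[OF R(1)]]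
  have "M ** (matrix_inv R ** matrix_inv R) = mat 1"
  proof -
    have "M ** (matrix_inv R ** matrix_inv R) = R ** (R ** matrix_inv R) ** matrix_inv R"
      using R(2) by (simp add: matrix_mul_assoc)
    also have "\<dots> = mat 1" using ip by simp
    finally show ?thesis .
  qed
  then have "matrix_inv M = matrix_inv R ** matrix_inv R" by (rule inv_unique)
  then show ?thesis using False pd_inv[OF R(1)] unfolding mpow_half_def R_def by simp
qed

lemma Mk_pd:
  fixes A :: "real^'n^'n" and Z :: "real^'k^'n"
  assumes A: "pos_def A" and Bpd: "pos_def (A + \<alpha> *\<^sub>R (Z ** transpose Z))" and al: "\<alpha> \<in> {1, -1}"
  shows "pos_def (mat 1 + \<alpha> *\<^sub>R (transpose Z ** matrix_inv A ** Z))"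
proof -
  define Ai where "Ai = matrix_inv A"
  have Ai: "pos_def Ai" unfolding Ai_def by (rule pd_inv[OF A])
  have Ait: "transpose Ai = Ai" using Ai pos_def_def by blast
  note ipA = inv_props[OF pd_invertible[OF A]]
  have At: "transpose A = A" using A pos_def_def by blast
  have t: "transpose (mat 1 + \<alpha> *\<^sub>R (transpose Z ** Ai ** Z)) = mat 1 + \<alpha> *\<^sub>R (transpose Z ** Ai ** Z)"
    by (simp add: transpose_add' transpose_scaleR' matrix_transpose_mul Ait matrix_mul_assoc)
  have q: "y \<bullet> ((mat 1 + \<alpha> *\<^sub>R (transpose Z ** Ai ** Z)) *v y) = y \<bullet> y + \<alpha> * ((Z *v y) \<bullet> (Ai *v (Z *v y)))" for y
  proof -
    have "(mat 1 + \<alpha> *\<^sub>R (transpose Z ** Ai ** Z)) *v y = y + \<alpha> *\<^sub>R (transpose Z *v (Ai *v (Z *v y)))"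
      by (simp add: matrix_vector_mult_add_rdistrib scaleR_matrix_vector_assoc[symmetric] matrix_vector_mul_assoc matrix_mul_assoc)
    then show ?thesis by (simp add: inner_add_right inner_transpose inner_vmul)
  qed
  have "y \<bullet> ((mat 1 + \<alpha> *\<^sub>R (transpose Z ** Ai ** Z)) *v y) > 0" if "y \<noteq> 0" for y
  proof -
    define w where "w = Z *v y"
    have yy: "y \<bullet> y > 0" using that by simp
    show ?thesis
    proof (cases "\<alpha> = 1")
      case True
      have nn: "w \<bullet> (Ai *v w) \<ge> 0" using Ai unfolding pos_def_def by (metis inner_zero_left order.refl less_imp_le)
      have h: "0 < y \<bullet> y + 1 * (w \<bullet> (Ai *v w))" using yy nn by linarith
      then show ?thesis using q[of y, folded w_def] True by simp
    next
      case False
      then have am: "\<alpha> = -1" using al by simp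
      define u where "u = Ai *v w"
      have Au: "A *v u = w" unfolding u_def Ai_def by (simp add: matrix_vector_mul_assoc ipA)
      define a where "a = w \<bullet> u"
      have "a < y \<bullet> y"
      proof (cases "u = 0")
        case True
        then show ?thesis using yy a_def by simp
      next
        case False
        define q where "q = transpose Z *v u"
        have "u \<bullet> ((A + \<alpha> *\<^sub>R (Z ** transpose Z)) *v u) > 0" using Bpd False unfolding pos_def_def by blast
        moreover have "u \<bullet> ((A + \<alpha> *\<^sub>R (Z ** transpose Z)) *v u) = a - q \<bullet> q"
        proof -
          have "(A + \<alpha> *\<^sub>R (Z ** transpose Z)) *v u = w - Z *v q"
          proof -
            have zz: "(Z ** transpose Z) *v u = Z *v q" unfolding q_def by (simp only: matrix_vector_mul_assoc)
            show ?thesis using am Au zz by (simp add: matrix_vector_mult_diff_rdistrib)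
          qed
          moreover have "u \<bullet> (Z *v q) = q \<bullet> q"
          proof -
            have "u \<bullet> (Z *v q) = (transpose Z *v u) \<bullet> q"
              using inner_transpose[of u "transpose Z" q] by (simp only: transpose_transpose)
            then show ?thesis unfolding q_def[symmetric] .
          qed
          ultimately show ?thesis unfolding a_def by (simp add: inner_diff_right inner_commute)
        qed
        ultimately have aq: "q \<bullet> q < a" by simp
        have ya: "y \<bullet> q = a" unfolding q_def a_def w_def by (simp add: inner_transpose inner_vmul)
        have cs: "a \<le> norm y * norm q" using norm_cauchy_schwarz[of y q] ya by simp
        have qq: "q \<bullet> q = (norm q)^2" "y \<bullet> y = (norm y)^2" by (simp_all add: dot_square_norm)
        have a0: "a > 0" using aq qq by (metis le_less_trans zero_le_power2)
        have "a * a \<le> (norm y * norm q) * (norm y * norm q)" using cs a0 by (intro mult_mono) auto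
        also have "\<dots> = (norm y)^2 * (norm q)^2" by (simp add: power2_eq_square)
        also have "\<dots> < (norm y)^2 * a" using aq qq yy by (intro mult_strict_left_mono) auto
        finally have "a * a < (norm y)^2 * a" .
        then have "a < (norm y)^2" using a0 by simp
        then show ?thesis using qq by simp
      qed
      then show ?thesis using q[of y, folded w_def] am a_def u_def by simp
    qed
  qed
  then show ?thesis using t unfolding pos_def_def Ai_def by blast
qed

lemma woodbury_part:
  fixes A :: "real^'n^'n" and Z :: "real^'k^'n"
  assumes A: "pos_def A" and Bpd: "pos_def (A + \<alpha> *\<^sub>R (Z ** transpose Z))" and al: "\<alpha> \<in> {1, -1}"
    and V: "V = matrix_inv A ** Z ** matrix_inv (msqrt (mat 1 + \<alpha> *\<^sub>R (transpose Z ** matrix_inv A ** Z)))"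
  shows "matrix_inv (A + \<alpha> *\<^sub>R (Z ** transpose Z)) = matrix_inv A + (- \<alpha>) *\<^sub>R (V ** transpose V)"
proof -
  define Ai where "Ai = matrix_inv A"
  define N where "N = transpose Z ** Ai ** Z"
  define Mk where "Mk = mat 1 + \<alpha> *\<^sub>R N"
  define B where "B = A + \<alpha> *\<^sub>R (Z ** transpose Z)"
  define Ri where "Ri = matrix_inv (msqrt Mk)"
  have aa: "\<alpha> * \<alpha> = 1" using al by auto
  have Mpd: "pos_def Mk" unfolding Mk_def N_def Ai_def by (rule Mk_pd[OF A Bpd al])
  have Ri: "pos_def Ri" "Ri ** Ri = matrix_inv Mk"
    using mpow_props[OF Mpd, of "-1"] unfolding mpow_half_def Ri_def by auto
  have Rit: "transpose Ri = Ri" using Ri pos_def_def by blast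
  have Ait: "transpose Ai = Ai" using pd_inv[OF A] pos_def_def Ai_def by blast
  note ipA = inv_props[OF pd_invertible[OF A]]
  note ipM = inv_props[OF pd_invertible[OF Mpd]]
  define Mi where "Mi = matrix_inv Mk"
  have VV: "V ** transpose V = Ai ** Z ** Mi ** transpose Z ** Ai"
  proof -
    have "V ** transpose V = Ai ** Z ** Ri ** (transpose Ri ** transpose Z ** transpose Ai)"
      unfolding V Ai_def[symmetric] N_def[symmetric] Mk_def[symmetric] Ri_def[symmetric]
      by (simp add: matrix_transpose_mul matrix_mul_assoc)
    also have "\<dots> = Ai ** Z ** (Ri ** Ri) ** transpose Z ** Ai"
      by (simp add: Rit Ait matrix_mul_assoc)
    finally show ?thesis using Ri(2) Mi_def by simp
  qed
  have BAi: "B ** Ai = mat 1 + \<alpha> *\<^sub>R (Z ** transpose Z ** Ai)"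
    unfolding B_def Ai_def by (simp add: mm_add_rdistrib mm_scaleR_left ipA)
  have BAiZ: "B ** Ai ** Z = Z ** Mk"
  proof -
    have "B ** Ai ** Z = Z + \<alpha> *\<^sub>R (Z ** transpose Z ** Ai ** Z)"
      unfolding BAi by (simp add: mm_add_rdistrib mm_scaleR_left)
    also have "\<dots> = Z ** Mk"
      unfolding Mk_def N_def by (simp add: matrix_add_ldistrib mm_scaleR_right matrix_mul_assoc)
    finally show ?thesis .
  qed
  have "B ** (Ai ** Z ** Mi ** transpose Z ** Ai) = Z ** transpose Z ** Ai"
  proof -
    have "B ** (Ai ** Z ** Mi ** transpose Z ** Ai) = (B ** Ai ** Z) ** Mi ** transpose Z ** Ai"
      by (simp add: matrix_mul_assoc)
    also have "\<dots> = Z ** (Mk ** Mi) ** transpose Z ** Ai" unfolding BAiZ by (simp add: matrix_mul_assoc)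
    also have "\<dots> = Z ** transpose Z ** Ai" using ipM Mi_def by simp
    finally show ?thesis .
  qed
  then have "B ** (Ai - \<alpha> *\<^sub>R (Ai ** Z ** Mi ** transpose Z ** Ai)) = mat 1"
    using BAi aa by (simp add: mm_sub_ldistrib mm_scaleR_right)
  then have "matrix_inv B = Ai - \<alpha> *\<^sub>R (Ai ** Z ** Mi ** transpose Z ** Ai)" by (rule inv_unique)
  then show ?thesis unfolding B_def Ai_def[symmetric] VV by simp
qed

theorem proposition8:
  fixes A :: "real^'n^'n" and Z V :: "real^'k^'n" and \<alpha> \<beta> :: real
  assumes "transpose A = A"
    and "\<alpha> \<in> {1, -1}" and "\<beta> \<in> {1, -1}"
    and "pos_def A" and "pos_def (A + \<alpha> *\<^sub>R (Z ** transpose Z))"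
    and "V = (if \<beta> = 1 then Z
              else matrix_inv A ** Z **
                   matrix_inv (msqrt (mat 1 + \<alpha> *\<^sub>R (transpose Z ** matrix_inv A ** Z))))"
  shows "mpow_half \<beta> A ** ((\<alpha> * \<beta>) *\<^sub>R (mpow_half \<beta> (A + \<alpha> *\<^sub>R (Z ** transpose Z)) - mpow_half \<beta> A))
         + ((\<alpha> * \<beta>) *\<^sub>R (mpow_half \<beta> (A + \<alpha> *\<^sub>R (Z ** transpose Z)) - mpow_half \<beta> A)) ** mpow_half \<beta> A
         + (\<alpha> * \<beta>) *\<^sub>R (((\<alpha> * \<beta>) *\<^sub>R (mpow_half \<beta> (A + \<alpha> *\<^sub>R (Z ** transpose Z)) - mpow_half \<beta> A))
                          ** ((\<alpha> * \<beta>) *\<^sub>R (mpow_half \<beta> (A + \<alpha> *\<^sub>R (Z ** transpose Z)) - mpow_half \<beta> A)))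
         = V ** transpose V
         \<and> (\<forall>C :: real^'n^'n.
           mpow_half \<beta> A ** C + C ** mpow_half \<beta> A + (\<alpha> * \<beta>) *\<^sub>R (C ** C) = V ** transpose V \<and>
           pos_def C \<and> pos_def (mpow_half \<beta> A + (\<alpha> * \<beta>) *\<^sub>R C) \<longrightarrow>
           mpow_half \<beta> A + (\<alpha> * \<beta>) *\<^sub>R C = mpow_half \<beta> (A + \<alpha> *\<^sub>R (Z ** transpose Z)))"
proof -
  define B where "B = A + \<alpha> *\<^sub>R (Z ** transpose Z)"
  define S where "S = mpow_half \<beta> A"
  define T where "T = mpow_half \<beta> B"
  define W where "W = V ** transpose V"
  define \<gamma> where "\<gamma> = \<alpha> * \<beta>"
  have gg: "\<gamma> * \<gamma> = 1" using assms(2,3) \<gamma>_def by auto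
  have Sp: "pos_def S" "S ** S = (if \<beta> = 1 then A else matrix_inv A)"
    using mpow_props[OF assms(4) assms(3)] S_def by auto
  have Tp: "pos_def T" "T ** T = (if \<beta> = 1 then B else matrix_inv B)"
    using mpow_props[OF assms(5)[folded B_def] assms(3)] T_def by auto
  have key: "T ** T = S ** S + \<gamma> *\<^sub>R W"
  proof (cases "\<beta> = 1")
    case True
    then show ?thesis using Sp Tp assms(6) unfolding B_def W_def \<gamma>_def by simp
  next
    case False
    then have bm: "\<beta> = -1" using assms(3) by simp
    have "matrix_inv B = matrix_inv A + (- \<alpha>) *\<^sub>R W"
      unfolding B_def W_def using woodbury_part[OF assms(4) assms(5) assms(2)] assms(6) False by simp
    then show ?thesis using Sp Tp False bm unfolding \<gamma>_def by simp
  qed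
  have part1: "S ** (\<gamma> *\<^sub>R (T - S)) + (\<gamma> *\<^sub>R (T - S)) ** S + \<gamma> *\<^sub>R ((\<gamma> *\<^sub>R (T - S)) ** (\<gamma> *\<^sub>R (T - S))) = W"
  proof -
    have "S ** (\<gamma> *\<^sub>R (T - S)) + (\<gamma> *\<^sub>R (T - S)) ** S + \<gamma> *\<^sub>R ((\<gamma> *\<^sub>R (T - S)) ** (\<gamma> *\<^sub>R (T - S)))
        = \<gamma> *\<^sub>R (S ** T - S ** S) + \<gamma> *\<^sub>R (T ** S - S ** S) + (\<gamma> * \<gamma> * \<gamma>) *\<^sub>R (T ** T - T ** S - (S ** T - S ** S))"
      by (simp add: mm_sub_ldistrib mm_sub_rdistrib mm_scaleR_left mm_scaleR_right algebra_simps)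
    also have "\<dots> = \<gamma> *\<^sub>R (T ** T - S ** S)"
      using gg by (simp add: algebra_simps)
    also have "\<dots> = (\<gamma> * \<gamma>) *\<^sub>R W" using key by simp
    finally show ?thesis using gg by simp
  qed
  have part2: "S + \<gamma> *\<^sub>R C = T"
    if "S ** C + C ** S + \<gamma> *\<^sub>R (C ** C) = W" "pos_def (S + \<gamma> *\<^sub>R C)" for C
  proof -
    have "(S + \<gamma> *\<^sub>R C) ** (S + \<gamma> *\<^sub>R C) = S ** S + \<gamma> *\<^sub>R (S ** C + C ** S + \<gamma> *\<^sub>R (C ** C))"
      by (simp add: matrix_add_ldistrib mm_add_rdistrib mm_scaleR_left mm_scaleR_right algebra_simps)
    also have "\<dots> = T ** T" using that(1) key by simp
    finally show ?thesis using psd_sqrt_unique[OF that(2) Tp(1)] by simp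
  qed
  show ?thesis
    using part1 part2 unfolding S_def[symmetric] T_def[symmetric] B_def[symmetric] W_def[symmetric] \<gamma>_def[symmetric]
    by blast
qed

end
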